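(* Let $k\le n$ be positive integers. The set $\mathcal C_{n,k}$ (the neglex standard monomial basis of $S_{n,k}$) consists exactly of the monomials $x_1^{a_1}\cdots x_n^{a_n}$ whose exponent sequence $(a_1,\dots,a_n)$ is componentwise $\le$ some $(n,k)$-staircase.
   Context: $S_{n,k}=\mathbb F[x_1,\dots,x_n]/J_{n,k}$, where $J_{n,k}$ is generated by $h_k(x_1),h_k(x_1,x_2),\dots,h_k(x_1,\dots,x_n)$ (complete homogeneous symmetric polynomials) and $e_n,e_{n-1},\dots,e_{n-k+1}$ (elementary symmetric polynomials in $x_1,\dots,x_n$). For $S=\{s_1<\cdots<s_m\}\subseteq[n]$, $\mathbf x(S)^*=x_{n-s_1+1}^{s_1}x_{n-s_2+1}^{s_2-1}\cdots x_{n-s_m+1}^{s_m-m+1}$. $\mathcal C_{n,k}$ is the set of monomials $m$ with $x_i^k\nmid m$ for all $i$ and $\mathbf x(S)^*\nmid m$ for all $S\subseteq[n]$ with $|S|=n-k+1$. A shuffle of sequences $(a_1,\dots,a_r)$ and $(b_1,\dots,b_s)$ is an interleaving preserving the relative order of the $a$'s and of the $b$'s. An $(n,k)$-staircase is a shuffle of $(k-1,k-2,\dots,1,0)$ with the sequence $(k-1,\dots,k-1)$ consisting of $n-k$ copies of $k-1$. *)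

theory Defs
  imports Main
begin

text \<open>A monomial x_1^a_1 ... x_n^a_n is represented by its exponent list [a_1,...,a_n]
  (list index i corresponds to the variable x_(i+1)).\<close>

definition mon_dvd :: "nat list \<Rightarrow> nat list \<Rightarrow> bool" where
  "mon_dvd u m \<longleftrightarrow> list_all2 (\<le>) u m"

text \<open>x(S)^*: for S = {s_1 < ... < s_m}, the variable x_(n - s_j + 1) gets exponent
  s_j - j + 1.  Position i (variable x_(i+1)) corresponds to s = n - i; the 1-based rank
  j of s in S is card {t in S. t < s} + 1, so the exponent is s - card {t in S. t < s}.\<close>

definition xS_star :: "nat \<Rightarrow> nat set \<Rightarrow> nat list" where
  "xS_star n S = map (\<lambda>i. let s = n - i in
      if s \<in> S then s - card {t \<in> S. t < s} else 0) [0..<n]"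

definition C_set :: "nat \<Rightarrow> nat \<Rightarrow> nat list set" where
  "C_set n k = {m. length m = n \<and> (\<forall>i < n. m ! i < k) \<and>
      (\<forall>S. S \<subseteq> {1..n} \<and> card S = n - k + 1 \<longrightarrow> \<not> mon_dvd (xS_star n S) m)}"

definition staircases :: "nat \<Rightarrow> nat \<Rightarrow> nat list set" where
  "staircases n k = shuffles (rev [0..<k]) (replicate (n - k) (k - 1))"

end

theory Submission
  imports Defs
begin

fun good :: "nat \<Rightarrow> nat list \<Rightarrow> nat \<Rightarrow> bool" where
  "good v [] c = (c = 0)"
| "good v (x # a) c = ((0 < c \<and> x < c \<and> good v a (c - 1)) \<or> (c \<le> length a \<and> x \<le> v \<and> good v a c))"

fun badP :: "nat list \<Rightarrow> nat \<Rightarrow> bool" where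
  "badP [] m = (m = 0)"
| "badP (x # a) m = ((0 < m \<and> length a + 2 \<le> x + m \<and> badP a (m - 1)) \<or> badP a m)"

lemma good_len: "good v a c \<Longrightarrow> c \<le> length a"
proof (induction a arbitrary: c)
  case Nil then show ?case by simp
next
  case (Cons x a)
  then show ?case by (fastforce dest: Cons.IH)
qed

lemma badP_len: "badP a m \<Longrightarrow> m \<le> length a"
proof (induction a arbitrary: m)
  case Nil then show ?case by simp
next
  case (Cons x a)
  then show ?case by (fastforce dest: Cons.IH)
qed

lemma good_mono: "good v a c \<Longrightarrow> \<forall>x\<in>set a. x \<le> v \<Longrightarrow> good v a (c - 1)"
proof (induction a arbitrary: c)
  case Nil then show ?case by simp
next
  case (Cons x a c)
  show ?case
  proof (cases "0 < c \<and> x < c \<and> good v a (c - 1)")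
    case True
    then show ?thesis using good_len[of v a "c-1"] Cons.prems by (cases c) auto
  next
    case False
    then have "c \<le> length a \<and> x \<le> v \<and> good v a c" using Cons.prems by auto
    then show ?thesis using Cons.IH[of c] Cons.prems by auto
  qed
qed

lemma badP_zero: "badP a 0"
  by (induction a) auto

lemma good_bound: "good v a c \<Longrightarrow> c \<le> Suc v \<Longrightarrow> \<forall>x\<in>set a. x \<le> v"
proof (induction a arbitrary: c)
  case Nil then show ?case by simp
next
  case (Cons x a)
  then show ?case by (fastforce dest: Cons.IH)
qed

lemma good_zero: "good v a 0 \<longleftrightarrow> (\<forall>x\<in>set a. x \<le> v)"
  by (induction a) auto

lemma shuffle_good:
  "c \<le> length a \<Longrightarrow>
   (\<exists>s \<in> shuffles (rev [0..<c]) (replicate (length a - c) v). list_all2 (\<le>) a s) \<longleftrightarrow> good v a c"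
proof (induction a arbitrary: c)
  case Nil then show ?case by simp
next
  case (Cons x a c)
  let ?L = "length a"
  have "(\<exists>s \<in> shuffles (rev [0..<c]) (replicate (Suc ?L - c) v). list_all2 (\<le>) (x # a) s)
     \<longleftrightarrow> (\<exists>z zs. z # zs \<in> shuffles (rev [0..<c]) (replicate (Suc ?L - c) v) \<and> x \<le> z \<and> list_all2 (\<le>) a zs)"
    by (auto simp: list_all2_Cons1)
  also have "\<dots> \<longleftrightarrow> (\<exists>z zs. ((0 < c \<and> z = c - 1 \<and> zs \<in> shuffles (rev [0..<c - 1]) (replicate (?L - (c - 1)) v))
        \<or> (c \<le> ?L \<and> z = v \<and> zs \<in> shuffles (rev [0..<c]) (replicate (?L - c) v))) \<and> x \<le> z \<and> list_all2 (\<le>) a zs)"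
  proof -
    have B: "\<And>z zs. (z # zs \<in> shuffles (rev [0..<c]) (replicate (Suc ?L - c) v)) \<longleftrightarrow>
      ((0 < c \<and> z = c - 1 \<and> zs \<in> shuffles (rev [0..<c - 1]) (replicate (?L - (c - 1)) v))
        \<or> (c \<le> ?L \<and> z = v \<and> zs \<in> shuffles (rev [0..<c]) (replicate (?L - c) v)))"
    proof -
      fix z zs
      have r4: "replicate (Suc ?L - c) v \<noteq> [] \<longleftrightarrow> c \<le> ?L" by auto
      have r5: "c \<le> ?L \<Longrightarrow> hd (replicate (Suc ?L - c) v) = v \<and> tl (replicate (Suc ?L - c) v) = replicate (?L - c) v"
        by (simp add: Suc_diff_le)
      show "(z # zs \<in> shuffles (rev [0..<c]) (replicate (Suc ?L - c) v)) \<longleftrightarrow>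
      ((0 < c \<and> z = c - 1 \<and> zs \<in> shuffles (rev [0..<c - 1]) (replicate (?L - (c - 1)) v))
        \<or> (c \<le> ?L \<and> z = v \<and> zs \<in> shuffles (rev [0..<c]) (replicate (?L - c) v)))"
      proof (cases c)
        case 0
        then show ?thesis unfolding Cons_in_shuffles_iff using r4 r5 by auto
      next
        case (Suc d)
        have r3: "Suc ?L - c = ?L - d" using Cons.prems Suc by auto
        have r2: "rev [0..<c] = d # rev [0..<d]" using Suc by simp
        show ?thesis unfolding Cons_in_shuffles_iff r2 using r4 r5 Suc r3 by auto
      qed
    qed
    show ?thesis by (simp only: B)
  qed
  also have "\<dots> \<longleftrightarrow> ((0 < c \<and> x < c \<and> good v a (c - 1)) \<or> (c \<le> ?L \<and> x \<le> v \<and> good v a c))"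
  proof -
    have i1: "0 < c \<Longrightarrow> (\<exists>s \<in> shuffles (rev [0..<c - 1]) (replicate (?L - (c - 1)) v). list_all2 (\<le>) a s) \<longleftrightarrow> good v a (c - 1)"
      using Cons.IH[of "c - 1"] Cons.prems by auto
    have i2: "c \<le> ?L \<Longrightarrow> (\<exists>s \<in> shuffles (rev [0..<c]) (replicate (?L - c) v). list_all2 (\<le>) a s) \<longleftrightarrow> good v a c"
      using Cons.IH[of c] by auto
    show ?thesis
    proof
      assume "\<exists>z zs. ((0 < c \<and> z = c - 1 \<and> zs \<in> shuffles (rev [0..<c - 1]) (replicate (?L - (c - 1)) v))
        \<or> (c \<le> ?L \<and> z = v \<and> zs \<in> shuffles (rev [0..<c]) (replicate (?L - c) v))) \<and> x \<le> z \<and> list_all2 (\<le>) a zs"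
      then show "(0 < c \<and> x < c \<and> good v a (c - 1)) \<or> (c \<le> ?L \<and> x \<le> v \<and> good v a c)"
        using i1 i2 by fastforce
    next
      assume "(0 < c \<and> x < c \<and> good v a (c - 1)) \<or> (c \<le> ?L \<and> x \<le> v \<and> good v a c)"
      then show "\<exists>z zs. ((0 < c \<and> z = c - 1 \<and> zs \<in> shuffles (rev [0..<c - 1]) (replicate (?L - (c - 1)) v))
        \<or> (c \<le> ?L \<and> z = v \<and> zs \<in> shuffles (rev [0..<c]) (replicate (?L - c) v))) \<and> x \<le> z \<and> list_all2 (\<le>) a zs"
        using i1 i2 by fastforce
    qed
  qed
  finally show ?case by simp
qed

lemma good_badP:
  "c \<le> Suc (length a) \<Longrightarrow> \<forall>x\<in>set a. x \<le> v \<Longrightarrow> good v a c \<longleftrightarrow> \<not> badP a (Suc (length a) - c)"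
proof (induction a arbitrary: c)
  case Nil then show ?case by (cases c) auto
next
  case (Cons x a c)
  let ?L = "length a"
  show ?case
  proof (cases c)
    case 0
    then show ?thesis using Cons.prems good_zero[of v "x#a"] badP_len[of "x#a" "Suc (Suc ?L)"] by auto
  next
    case (Suc d)
    have xv: "x \<le> v" and av: "\<forall>y\<in>set a. y \<le> v" using Cons.prems by auto
    have e1: "good v a d \<longleftrightarrow> \<not> badP a (Suc ?L - d)" using Cons.IH[of d] Cons.prems Suc by auto
    have e2: "good v a c \<longleftrightarrow> \<not> badP a (Suc ?L - c)"
    proof (cases "c \<le> Suc ?L")
      case True then show ?thesis using Cons.IH[of c] av by auto
    next
      case False
      then have "Suc ?L - c = 0" by auto
      then show ?thesis using False good_len[of v a c] by (auto simp: badP_zero)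
    qed
    have mono: "good v a c \<Longrightarrow> good v a d" using good_mono[of v a c] Suc av by simp
    have "badP (x # a) (Suc (Suc ?L) - c) \<longleftrightarrow> ((?L + 2 \<le> x + (Suc (Suc ?L) - c) \<and> badP a (Suc ?L - c)) \<or> badP a (Suc (Suc ?L) - c))"
    proof (cases "c = Suc (Suc ?L)")
      case True
      then show ?thesis by (simp add: badP_zero)
    next
      case False
      then have "0 < Suc (Suc ?L) - c" using Cons.prems by auto
      then show ?thesis using Cons.prems Suc by (simp add: Suc_diff_le)
    qed
    also have "\<dots> \<longleftrightarrow> ((c \<le> x \<and> badP a (Suc ?L - c)) \<or> badP a (Suc ?L - d))"
      using Cons.prems Suc by auto
    finally have b: "badP (x # a) (Suc (Suc ?L) - c) \<longleftrightarrow> ((c \<le> x \<and> badP a (Suc ?L - c)) \<or> badP a (Suc ?L - d))" .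
    have g: "good v (x # a) c \<longleftrightarrow> ((x < c \<and> good v a d) \<or> good v a c)"
      using Suc xv good_len[of v a c] by auto
    show ?thesis using b g e1 e2 mono by auto
  qed
qed

lemma idx_shift: "1 \<le> s \<Longrightarrow> s \<le> L \<Longrightarrow> (x # a) ! (Suc L - s) = a ! (L - s)"
  by (simp add: Suc_diff_le)

lemma badP_sets:
  "badP a m \<longleftrightarrow> (\<exists>S. S \<subseteq> {1..length a} \<and> card S = m \<and>
      (\<forall>s\<in>S. s - card {t\<in>S. t < s} \<le> a ! (length a - s)))"
proof (induction a arbitrary: m)
  case Nil
  show ?case
  proof
    assume "badP [] m" then have "m = 0" by simp
    then show "\<exists>S. S \<subseteq> {1..length ([]::nat list)} \<and> card S = m \<and>
      (\<forall>s\<in>S. s - card {t\<in>S. t < s} \<le> ([]::nat list) ! (length ([]::nat list) - s))"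
      by (intro exI[of _ "{}"]) auto
  next
    assume "\<exists>S. S \<subseteq> {1..length ([]::nat list)} \<and> card S = m \<and>
      (\<forall>s\<in>S. s - card {t\<in>S. t < s} \<le> ([]::nat list) ! (length ([]::nat list) - s))"
    then obtain S where "S \<subseteq> {1..length ([]::nat list)}" "card S = m" by blast
    then show "badP [] m" by simp
  qed
next
  case (Cons x a m)
  let ?L = "length a"
  define P where "P = (\<lambda>(b::nat list) S. \<forall>s\<in>S. s - card {t\<in>S. t < s} \<le> b ! (length b - s))"
  have IH: "\<And>m. badP a m \<longleftrightarrow> (\<exists>S. S \<subseteq> {1..?L} \<and> card S = m \<and> P a S)"
    using Cons.IH unfolding P_def by blast
  have transfer: "P (x # a) S \<longleftrightarrow> P a S" if "S \<subseteq> {1..?L}" for S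
  proof -
    have e: "\<And>s. s \<in> S \<Longrightarrow> (x # a) ! (length (x # a) - s) = a ! (length a - s)"
    proof -
      fix s assume "s \<in> S"
      then have "1 \<le> s" "s \<le> ?L" using that by auto
      then show "(x # a) ! (length (x # a) - s) = a ! (length a - s)"
        using idx_shift[of s ?L x a] by simp
    qed
    show ?thesis unfolding P_def
    proof
      assume H: "\<forall>s\<in>S. s - card {t \<in> S. t < s} \<le> (x # a) ! (length (x # a) - s)"
      show "\<forall>s\<in>S. s - card {t \<in> S. t < s} \<le> a ! (length a - s)"
        using H e by (simp only: Ball_def) metis
    next
      assume H: "\<forall>s\<in>S. s - card {t \<in> S. t < s} \<le> a ! (length a - s)"
      show "\<forall>s\<in>S. s - card {t \<in> S. t < s} \<le> (x # a) ! (length (x # a) - s)"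
        using H e by (simp only: Ball_def) metis
    qed
  qed
  have ins: "P (x # a) (insert (Suc ?L) S) \<longleftrightarrow> (P a S \<and> Suc ?L - card S \<le> x)" if "S \<subseteq> {1..?L}" for S
  proof -
    have fin: "finite S" using that finite_subset by blast
    have c1: "{t \<in> insert (Suc ?L) S. t < s} = {t\<in>S. t < s}" if "s \<in> S" for s
      using \<open>S \<subseteq> {1..?L}\<close> that by auto
    have c2: "{t \<in> insert (Suc ?L) S. t < Suc ?L} = S"
      using \<open>S \<subseteq> {1..?L}\<close> by auto
    have sp: "P (x # a) (insert (Suc ?L) S) \<longleftrightarrow>
      (Suc ?L - card {t \<in> insert (Suc ?L) S. t < Suc ?L} \<le> (x # a) ! (length (x # a) - Suc ?L)) \<and>
      (\<forall>s\<in>S. s - card {t \<in> insert (Suc ?L) S. t < s} \<le> (x # a) ! (length (x # a) - s))"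
      by (simp only: P_def ball_simps(7))
    have h1: "(Suc ?L - card {t \<in> insert (Suc ?L) S. t < Suc ?L} \<le> (x # a) ! (length (x # a) - Suc ?L))
       \<longleftrightarrow> (Suc ?L - card S \<le> x)" using c2 by simp
    have h2: "(\<forall>s\<in>S. s - card {t \<in> insert (Suc ?L) S. t < s} \<le> (x # a) ! (length (x # a) - s))
       \<longleftrightarrow> P (x # a) S"
      unfolding P_def
    proof (rule ball_cong[OF refl])
      fix s assume "s \<in> S"
      show "(s - card {t \<in> insert (Suc ?L) S. t < s} \<le> (x # a) ! (length (x # a) - s)) \<longleftrightarrow>
        (s - card {t \<in> S. t < s} \<le> (x # a) ! (length (x # a) - s))"
        by (simp only: c1[OF \<open>s \<in> S\<close>])
    qed
    have "P (x # a) (insert (Suc ?L) S) \<longleftrightarrow> (P (x # a) S \<and> Suc ?L - card S \<le> x)"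
      using sp h1 h2 by blast
    then show ?thesis using transfer[OF that] by simp
  qed
  have "badP (x # a) m \<longleftrightarrow> (\<exists>S. S \<subseteq> {1..Suc ?L} \<and> card S = m \<and> P (x # a) S)"
  proof
    assume "badP (x # a) m"
    then consider "0 < m" "?L + 2 \<le> x + m" "badP a (m - 1)" | "badP a m" by auto
    then show "\<exists>S. S \<subseteq> {1..Suc ?L} \<and> card S = m \<and> P (x # a) S"
    proof cases
      case 1
      then obtain S where S: "S \<subseteq> {1..?L}" "card S = m - 1" "P a S" using IH[of "m - 1"] by blast
      have fin: "finite S" using S(1) finite_subset by blast
      have nin: "Suc ?L \<notin> S" using S(1) by auto
      have "card (insert (Suc ?L) S) = m" using fin nin S(2) 1(1) by simp
      moreover have "insert (Suc ?L) S \<subseteq> {1..Suc ?L}" using S(1) by auto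
      moreover have "P (x # a) (insert (Suc ?L) S)" using ins[OF S(1)] S 1 by auto
      ultimately show ?thesis by blast
    next
      case 2
      then obtain S where S: "S \<subseteq> {1..?L}" "card S = m" "P a S" using IH[of m] by blast
      then show ?thesis using transfer[OF S(1)] by (intro exI[of _ S]) auto
    qed
  next
    assume "\<exists>S. S \<subseteq> {1..Suc ?L} \<and> card S = m \<and> P (x # a) S"
    then obtain S where S: "S \<subseteq> {1..Suc ?L}" "card S = m" "P (x # a) S" by blast
    show "badP (x # a) m"
    proof (cases "Suc ?L \<in> S")
      case True
      define S' where "S' = S - {Suc ?L}"
      have S'sub: "S' \<subseteq> {1..?L}" using S(1) unfolding S'_def by auto
      have fin: "finite S'" using S'sub finite_subset by blast
      have Seq: "S = insert (Suc ?L) S'" using True unfolding S'_def by auto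
      have nin: "Suc ?L \<notin> S'" unfolding S'_def by auto
      have cS: "card S = Suc (card S')" using Seq fin nin by simp
      have "P a S' \<and> Suc ?L - card S' \<le> x" using ins[OF S'sub] S(3) Seq by simp
      then have "badP a (m - 1)" "?L + 2 \<le> x + m" "0 < m" using IH[of "m - 1"] S'sub cS S(2) by auto
      then show ?thesis by simp
    next
      case False
      then have "S \<subseteq> {1..?L}" using S(1) by (auto simp: subset_iff le_Suc_eq)
      then have "badP a m" using IH[of m] S(2,3) transfer[OF \<open>S \<subseteq> {1..?L}\<close>] by blast
      then show ?thesis by simp
    qed
  qed
  then show ?case by (simp only: P_def length_Cons)
qed

lemma mon_dvd_iff:
  assumes "length a = n" "S \<subseteq> {1..n}"
  shows "mon_dvd (xS_star n S) a \<longleftrightarrow> (\<forall>s\<in>S. s - card {t\<in>S. t < s} \<le> a ! (n - s))"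
proof -
  have "mon_dvd (xS_star n S) a \<longleftrightarrow>
      (\<forall>i<n. (if n - i \<in> S then (n - i) - card {t\<in>S. t < n - i} else 0) \<le> a ! i)"
    unfolding mon_dvd_def xS_star_def using assms(1) by (auto simp: list_all2_conv_all_nth Let_def)
  also have "\<dots> \<longleftrightarrow> (\<forall>s\<in>S. s - card {t\<in>S. t < s} \<le> a ! (n - s))"
  proof
    assume H: "\<forall>i<n. (if n - i \<in> S then (n - i) - card {t\<in>S. t < n - i} else 0) \<le> a ! i"
    show "\<forall>s\<in>S. s - card {t\<in>S. t < s} \<le> a ! (n - s)"
    proof
      fix s assume s: "s \<in> S"
      then have "1 \<le> s" "s \<le> n" using assms(2) by auto
      then have "n - s < n" "n - (n - s) = s" by auto
      then show "s - card {t\<in>S. t < s} \<le> a ! (n - s)" using H[rule_format, of "n - s"] s by simp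
    qed
  next
    assume H: "\<forall>s\<in>S. s - card {t\<in>S. t < s} \<le> a ! (n - s)"
    show "\<forall>i<n. (if n - i \<in> S then (n - i) - card {t\<in>S. t < n - i} else 0) \<le> a ! i"
    proof (intro allI impI)
      fix i assume i: "i < n"
      then have "n - (n - i) = i" by auto
      then show "(if n - i \<in> S then (n - i) - card {t\<in>S. t < n - i} else 0) \<le> a ! i"
        using H[rule_format, of "n - i"] by auto
    qed
  qed
  finally show ?thesis .
qed

theorem mainTheorem5:
  fixes n k :: nat
  assumes "0 < k" and "k \<le> n"
  shows "C_set n k = {a. length a = n \<and> (\<exists>s \<in> staircases n k. list_all2 (\<le>) a s)}"
proof (intro set_eqI iffI; simp only: mem_Collect_eq)
  fix a
  assume "a \<in> C_set n k"
  then have len: "length a = n" and lt: "\<forall>i<n. a ! i < k"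
    and nS: "\<forall>S. S \<subseteq> {1..n} \<and> card S = n - k + 1 \<longrightarrow> \<not> mon_dvd (xS_star n S) a"
    unfolding C_set_def by auto
  have nb: "\<not> badP a (n - k + 1)"
  proof
    assume b: "badP a (n - k + 1)"
    have "\<exists>S. S \<subseteq> {1..length a} \<and> card S = n - k + 1 \<and>
      (\<forall>s\<in>S. s - card {t\<in>S. t < s} \<le> a ! (length a - s))"
      using badP_sets[of a "n - k + 1"] b by blast
    then obtain S where S: "S \<subseteq> {1..n}" "card S = n - k + 1"
      "\<forall>s\<in>S. s - card {t\<in>S. t < s} \<le> a ! (n - s)"
      using len by blast
    have "mon_dvd (xS_star n S) a" using mon_dvd_iff[OF len S(1)] S(3) by blast
    then show False using nS S(1,2) by blast
  qed
  have av: "\<forall>x\<in>set a. x \<le> k - 1" proof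
    fix x assume "x \<in> set a"
    then obtain i where "i < n" "x = a ! i" using len by (auto simp: in_set_conv_nth)
    then show "x \<le> k - 1" using lt by fastforce
  qed
  have "good (k - 1) a k" using good_badP[of k a "k - 1"] av nb len assms
    by (simp add: Suc_diff_le)
  then show "length a = n \<and> (\<exists>s \<in> staircases n k. list_all2 (\<le>) a s)"
    using shuffle_good[of k a "k - 1"] len assms unfolding staircases_def by auto
next
  fix a
  assume "length a = n \<and> (\<exists>s \<in> staircases n k. list_all2 (\<le>) a s)"
  then have len: "length a = n" and g: "good (k - 1) a k"
    using shuffle_good[of k a "k - 1"] assms unfolding staircases_def by auto
  have av: "\<forall>x\<in>set a. x \<le> k - 1" using good_bound[OF g] assms by simp
  have lt: "\<forall>i<n. a ! i < k" using av len assms by (auto simp: all_set_conv_all_nth)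
  have nb: "\<not> badP a (n - k + 1)" using good_badP[of k a "k - 1"] av g len assms
    by (simp add: Suc_diff_le)
  have nS: "\<forall>S. S \<subseteq> {1..n} \<and> card S = n - k + 1 \<longrightarrow> \<not> mon_dvd (xS_star n S) a"
  proof (intro allI impI)
    fix S assume S: "S \<subseteq> {1..n} \<and> card S = n - k + 1"
    show "\<not> mon_dvd (xS_star n S) a"
    proof
      assume "mon_dvd (xS_star n S) a"
      then have "\<forall>s\<in>S. s - card {t\<in>S. t < s} \<le> a ! (n - s)" using mon_dvd_iff[OF len] S by blast
      then have "\<exists>S. S \<subseteq> {1..length a} \<and> card S = n - k + 1 \<and>
        (\<forall>s\<in>S. s - card {t\<in>S. t < s} \<le> a ! (length a - s))" using S len by blast
      then have "badP a (n - k + 1)" using badP_sets[of a "n - k + 1"] by blast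
      then show False using nb by simp
    qed
  qed
  show "a \<in> C_set n k" unfolding C_set_def using len lt nS by auto
qed

end
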